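(* Let $(H,B_1,B_2)$ be a Rota-Baxter system of Hopf algebras with descendent operation $\circ$ and cocycle $\sigma$. Then $(H,\cdot,\circ)$ is a Hopf truss with cocycle $\sigma$.
   Context: $\mathbb{F}$ is a field of characteristic $0$; Sweedler notation $\Delta(a)=a_1\otimes a_2$. A Rota-Baxter system of Hopf algebras is a triple $(H,B_1,B_2)$ where $(H,\cdot,1,\Delta,\epsilon,S)$ is a cocommutative Hopf algebra and $B_1,B_2:H\to H$ are coalgebra homomorphisms with $B_1(1)=B_2(1)=1$ such that for all $a,b\in H$: $B_1(a)B_1(b)=B_1(B_1(a_1)bS(B_2(a_2)))$ and $B_2(a)B_2(b)=B_2(B_1(a_1)bS(B_2(a_2)))$. Its descendent operation is $a\circ b=B_1(a_1)bS(B_2(a_2))$ and cocycle $\sigma(a)=B_1(a_1)S(B_2(a_2))$. Given a Hopf algebra $(H,\cdot,1,\Delta,\epsilon,S)$ and a binary operation $\circ$ on $H$ making $(H,\circ,\Delta,\epsilon)$ a (not necessarily unital) bialgebra (i.e. $\circ$ is associative and $\Delta,\epsilon$ are multiplicative for $\circ$), $(H,\cdot,\circ)$ is a Hopf truss with cocycle $\sigma$ if $\sigma:H\to H$ is a coalgebra homomorphism and $a\circ(bc)=(a_1\circ b)S(\sigma(a_2))(a_3\circ c)$ for all $a,b,c\in H$. *)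

theory Defs
  imports Complex_Main
begin

text \<open>
An element of H (x) H (resp. H (x) H (x) H) is represented by a finite list
of pairs (resp. triples), standing for the sum of the corresponding elementary tensors.
Two such representatives denote the same tensor iff they agree under every scalar-valued
bilinear (resp. trilinear) form (universal property of the tensor product, together with the
fact that scalar-valued forms separate the points of a tensor product of vector spaces).
The comultiplication is a function D returning a representative of D(a), and a Sweedler sum
a_1 (x) a_2 |-> f a_1 a_2 (for f bilinear) is evaluated on that representative.
\<close>

definition sw2 :: "('h \<times> 'h) list \<Rightarrow> ('h \<Rightarrow> 'h \<Rightarrow> 'b::comm_monoid_add) \<Rightarrow> 'b" where
  "sw2 T f = sum_list (map (\<lambda>(x, y). f x y) T)"

definition sw3 :: "('h \<times> 'h \<times> 'h) list \<Rightarrow> ('h \<Rightarrow> 'h \<Rightarrow> 'h \<Rightarrow> 'b::comm_monoid_add) \<Rightarrow> 'b" where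
  "sw3 T f = sum_list (map (\<lambda>(x, y, z). f x y z) T)"

definition bilinear_form :: "('k::field \<Rightarrow> 'h::ab_group_add \<Rightarrow> 'h) \<Rightarrow> ('h \<Rightarrow> 'h \<Rightarrow> 'k) \<Rightarrow> bool" where
  "bilinear_form sc \<beta> \<longleftrightarrow>
     (\<forall>x. Vector_Spaces.linear sc (*) (\<beta> x)) \<and> (\<forall>y. Vector_Spaces.linear sc (*) (\<lambda>x. \<beta> x y))"

definition trilinear_form :: "('k::field \<Rightarrow> 'h::ab_group_add \<Rightarrow> 'h) \<Rightarrow> ('h \<Rightarrow> 'h \<Rightarrow> 'h \<Rightarrow> 'k) \<Rightarrow> bool" where
  "trilinear_form sc \<tau> \<longleftrightarrow>
     (\<forall>y z. Vector_Spaces.linear sc (*) (\<lambda>x. \<tau> x y z)) \<and>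
     (\<forall>x z. Vector_Spaces.linear sc (*) (\<lambda>y. \<tau> x y z)) \<and>
     (\<forall>x y. Vector_Spaces.linear sc (*) (\<lambda>z. \<tau> x y z))"

definition teq2 :: "('k::field \<Rightarrow> 'h::ab_group_add \<Rightarrow> 'h) \<Rightarrow> ('h \<times> 'h) list \<Rightarrow> ('h \<times> 'h) list \<Rightarrow> bool" where
  "teq2 sc T T' \<longleftrightarrow> (\<forall>\<beta>. bilinear_form sc \<beta> \<longrightarrow> sw2 T \<beta> = sw2 T' \<beta>)"

definition teq3 :: "('k::field \<Rightarrow> 'h::ab_group_add \<Rightarrow> 'h) \<Rightarrow> ('h \<times> 'h \<times> 'h) list \<Rightarrow> ('h \<times> 'h \<times> 'h) list \<Rightarrow> bool" where
  "teq3 sc T T' \<longleftrightarrow> (\<forall>\<tau>. trilinear_form sc \<tau> \<longrightarrow> sw3 T \<tau> = sw3 T' \<tau>)"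

text \<open>(D (x) id) D a, and (id (x) D) D a.\<close>
definition comul2_left :: "('h \<Rightarrow> ('h \<times> 'h) list) \<Rightarrow> 'h \<Rightarrow> ('h \<times> 'h \<times> 'h) list" where
  "comul2_left D a = concat (map (\<lambda>(x, z). map (\<lambda>(u, v). (u, v, z)) (D x)) (D a))"

definition comul2_right :: "('h \<Rightarrow> ('h \<times> 'h) list) \<Rightarrow> 'h \<Rightarrow> ('h \<times> 'h \<times> 'h) list" where
  "comul2_right D a = concat (map (\<lambda>(x, y). map (\<lambda>(u, v). (x, u, v)) (D y)) (D a))"

definition tmul :: "('h \<Rightarrow> 'h \<Rightarrow> 'h) \<Rightarrow> ('h \<times> 'h) list \<Rightarrow> ('h \<times> 'h) list \<Rightarrow> ('h \<times> 'h) list" where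
  "tmul m T T' = concat (map (\<lambda>(u, v). map (\<lambda>(u', v'). (m u u', m v v')) T') T)"

definition hopf_algebra ::
  "('k::field \<Rightarrow> 'h::ring_1 \<Rightarrow> 'h) \<Rightarrow> ('h \<Rightarrow> ('h \<times> 'h) list) \<Rightarrow> ('h \<Rightarrow> 'k) \<Rightarrow> ('h \<Rightarrow> 'h) \<Rightarrow> bool" where
  "hopf_algebra sc D \<epsilon> S \<longleftrightarrow>
     \<comment> \<open>H is an associative unital algebra over 'k\<close>
     vector_space sc \<and>
     (\<forall>c x y. sc c (x * y) = sc c x * y \<and> sc c (x * y) = x * sc c y) \<and>
     \<comment> \<open>H is a coalgebra: D and \<epsilon> linear, coassociative, counital\<close>
     Vector_Spaces.linear sc (*) \<epsilon> \<and>
     (\<forall>x y. teq2 sc (D (x + y)) (D x @ D y)) \<and>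
     (\<forall>c x. teq2 sc (D (sc c x)) (map (\<lambda>(u, v). (sc c u, v)) (D x))) \<and>
     (\<forall>x. teq3 sc (comul2_left D x) (comul2_right D x)) \<and>
     (\<forall>x. sw2 (D x) (\<lambda>u v. sc (\<epsilon> u) v) = x) \<and>
     (\<forall>x. sw2 (D x) (\<lambda>u v. sc (\<epsilon> v) u) = x) \<and>
     \<comment> \<open>bialgebra compatibility\<close>
     (\<forall>x y. teq2 sc (D (x * y)) (tmul (*) (D x) (D y))) \<and>
     teq2 sc (D 1) [(1, 1)] \<and>
     (\<forall>x y. \<epsilon> (x * y) = \<epsilon> x * \<epsilon> y) \<and> \<epsilon> 1 = 1 \<and>
     \<comment> \<open>antipode\<close>
     Vector_Spaces.linear sc sc S \<and>
     (\<forall>x. sw2 (D x) (\<lambda>u v. S u * v) = sc (\<epsilon> x) 1) \<and>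
     (\<forall>x. sw2 (D x) (\<lambda>u v. u * S v) = sc (\<epsilon> x) 1)"

definition cocommutative :: "('k::field \<Rightarrow> 'h::ab_group_add \<Rightarrow> 'h) \<Rightarrow> ('h \<Rightarrow> ('h \<times> 'h) list) \<Rightarrow> bool" where
  "cocommutative sc D \<longleftrightarrow> (\<forall>x. teq2 sc (D x) (map (\<lambda>(u, v). (v, u)) (D x)))"

definition coalg_hom ::
  "('k::field \<Rightarrow> 'h::ab_group_add \<Rightarrow> 'h) \<Rightarrow> ('h \<Rightarrow> ('h \<times> 'h) list) \<Rightarrow> ('h \<Rightarrow> 'k) \<Rightarrow> ('h \<Rightarrow> 'h) \<Rightarrow> bool" where
  "coalg_hom sc D \<epsilon> B \<longleftrightarrow>
     Vector_Spaces.linear sc sc B \<and>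
     (\<forall>x. teq2 sc (D (B x)) (map (\<lambda>(u, v). (B u, B v)) (D x))) \<and>
     (\<forall>x. \<epsilon> (B x) = \<epsilon> x)"

definition desc :: "('h \<Rightarrow> ('h \<times> 'h) list) \<Rightarrow> ('h \<Rightarrow> 'h) \<Rightarrow> ('h \<Rightarrow> 'h) \<Rightarrow> ('h \<Rightarrow> 'h) \<Rightarrow> 'h \<Rightarrow> 'h \<Rightarrow> 'h::ring_1" where
  "desc D S B1 B2 a b = sw2 (D a) (\<lambda>x y. B1 x * b * S (B2 y))"

definition cocyc :: "('h \<Rightarrow> ('h \<times> 'h) list) \<Rightarrow> ('h \<Rightarrow> 'h) \<Rightarrow> ('h \<Rightarrow> 'h) \<Rightarrow> ('h \<Rightarrow> 'h) \<Rightarrow> 'h \<Rightarrow> 'h::ring_1" where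
  "cocyc D S B1 B2 a = sw2 (D a) (\<lambda>x y. B1 x * S (B2 y))"

definition rota_baxter_system ::
  "('k::field \<Rightarrow> 'h::ring_1 \<Rightarrow> 'h) \<Rightarrow> ('h \<Rightarrow> ('h \<times> 'h) list) \<Rightarrow> ('h \<Rightarrow> 'k) \<Rightarrow> ('h \<Rightarrow> 'h)
     \<Rightarrow> ('h \<Rightarrow> 'h) \<Rightarrow> ('h \<Rightarrow> 'h) \<Rightarrow> bool" where
  "rota_baxter_system sc D \<epsilon> S B1 B2 \<longleftrightarrow>
     hopf_algebra sc D \<epsilon> S \<and> cocommutative sc D \<and>
     coalg_hom sc D \<epsilon> B1 \<and> coalg_hom sc D \<epsilon> B2 \<and> B1 1 = 1 \<and> B2 1 = 1 \<and>
     (\<forall>a b. B1 a * B1 b = B1 (desc D S B1 B2 a b)) \<and>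
     (\<forall>a b. B2 a * B2 b = B2 (desc D S B1 B2 a b))"

definition nonunital_bialgebra ::
  "('k::field \<Rightarrow> 'h::ab_group_add \<Rightarrow> 'h) \<Rightarrow> ('h \<Rightarrow> ('h \<times> 'h) list) \<Rightarrow> ('h \<Rightarrow> 'k) \<Rightarrow> ('h \<Rightarrow> 'h \<Rightarrow> 'h) \<Rightarrow> bool" where
  "nonunital_bialgebra sc D \<epsilon> m \<longleftrightarrow>
     (\<forall>x. Vector_Spaces.linear sc sc (m x)) \<and> (\<forall>y. Vector_Spaces.linear sc sc (\<lambda>x. m x y)) \<and>
     (\<forall>x y z. m (m x y) z = m x (m y z)) \<and>
     (\<forall>x y. teq2 sc (D (m x y)) (tmul m (D x) (D y))) \<and>
     (\<forall>x y. \<epsilon> (m x y) = \<epsilon> x * \<epsilon> y)"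

definition hopf_truss ::
  "('k::field \<Rightarrow> 'h::ring_1 \<Rightarrow> 'h) \<Rightarrow> ('h \<Rightarrow> ('h \<times> 'h) list) \<Rightarrow> ('h \<Rightarrow> 'k) \<Rightarrow> ('h \<Rightarrow> 'h)
     \<Rightarrow> ('h \<Rightarrow> 'h \<Rightarrow> 'h) \<Rightarrow> ('h \<Rightarrow> 'h) \<Rightarrow> bool" where
  "hopf_truss sc D \<epsilon> S m \<sigma> \<longleftrightarrow>
     hopf_algebra sc D \<epsilon> S \<and> nonunital_bialgebra sc D \<epsilon> m \<and> coalg_hom sc D \<epsilon> \<sigma> \<and>
     (\<forall>a b c. m a (b * c) = sw3 (comul2_left D a) (\<lambda>x y z. m x b * S (\<sigma> y) * m z c))"

end

theory Submission imports Defs begin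

lemma vsK: "vector_space ((*) :: 'k::field \<Rightarrow> 'k \<Rightarrow> 'k)"
  by unfold_locales (auto simp: algebra_simps)

lemma linear_add: "Vector_Spaces.linear s1 s2 f \<Longrightarrow> f (x + y) = f x + f y"
  by (simp add: Vector_Spaces.linear_iff)
lemma linear_scale: "Vector_Spaces.linear s1 s2 f \<Longrightarrow> f (s1 c x) = s2 c (f x)"
  by (simp add: Vector_Spaces.linear_iff)
lemma linear_zero: "Vector_Spaces.linear s1 s2 f \<Longrightarrow> f 0 = 0"
  by (metis add_cancel_right_right linear_add)
lemma linearI: "vector_space s1 \<Longrightarrow> vector_space s2 \<Longrightarrow> (\<And>x y. f (x + y) = f x + f y)
  \<Longrightarrow> (\<And>c x. f (s1 c x) = s2 c (f x)) \<Longrightarrow> Vector_Spaces.linear s1 s2 f"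
  by (simp add: Vector_Spaces.linear_iff)
lemma linear_vs1: "Vector_Spaces.linear s1 s2 f \<Longrightarrow> vector_space s1" by (simp add: Vector_Spaces.linear_iff)
lemma linear_vs2: "Vector_Spaces.linear s1 s2 f \<Longrightarrow> vector_space s2" by (simp add: Vector_Spaces.linear_iff)

lemma separate:
  fixes s :: "'k::field \<Rightarrow> 'v::ab_group_add \<Rightarrow> 'v"
  assumes vs: "vector_space s" and a: "a \<noteq> 0"
  shows "\<exists>\<phi>. Vector_Spaces.linear s (*) \<phi> \<and> \<phi> a \<noteq> 0"
proof -
  interpret vector_space_pair s "(*) :: 'k \<Rightarrow> 'k \<Rightarrow> 'k"
    using vs vsK by (simp add: vector_space_pair_def)
  have "vs1.independent {a}" using a by (simp add: vs1.independent_insert vs1.span_empty)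
  from linear_independent_extend[OF this, of "\<lambda>_. 1"] show ?thesis by auto
qed

lemma sep_eq:
  fixes s :: "'k::field \<Rightarrow> 'v::ab_group_add \<Rightarrow> 'v"
  assumes vs: "vector_space s" and h: "\<And>\<phi>. Vector_Spaces.linear s (*) \<phi> \<Longrightarrow> \<phi> a = \<phi> b"
  shows "a = b"
proof (rule ccontr)
  assume "a \<noteq> b"
  then obtain \<phi> where l: "Vector_Spaces.linear s (*) \<phi>" and "\<phi> (a - b) \<noteq> 0"
    using separate[OF vs, of "a - b"] by auto
  moreover have "\<phi> (a - b) = \<phi> a - \<phi> b"
    using linear_add[OF l, of "a - b" b] by simp
  ultimately show False using h[OF l] by simp
qed


definition bil :: "('k::field \<Rightarrow> 'h::ab_group_add \<Rightarrow> 'h) \<Rightarrow> ('k \<Rightarrow> 'v::ab_group_add \<Rightarrow> 'v) \<Rightarrow> ('h \<Rightarrow> 'h \<Rightarrow> 'v) \<Rightarrow> bool" where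
  "bil s1 s2 F \<longleftrightarrow> (\<forall>x. Vector_Spaces.linear s1 s2 (F x)) \<and> (\<forall>y. Vector_Spaces.linear s1 s2 (\<lambda>x. F x y))"

definition tril :: "('k::field \<Rightarrow> 'h::ab_group_add \<Rightarrow> 'h) \<Rightarrow> ('k \<Rightarrow> 'v::ab_group_add \<Rightarrow> 'v) \<Rightarrow> ('h \<Rightarrow> 'h \<Rightarrow> 'h \<Rightarrow> 'v) \<Rightarrow> bool" where
  "tril s1 s2 G \<longleftrightarrow> (\<forall>y z. Vector_Spaces.linear s1 s2 (\<lambda>x. G x y z)) \<and>
     (\<forall>x z. Vector_Spaces.linear s1 s2 (\<lambda>y. G x y z)) \<and> (\<forall>x y. Vector_Spaces.linear s1 s2 (\<lambda>z. G x y z))"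

lemma sw2_Nil[simp]: "sw2 [] F = 0" by (simp add: sw2_def)
lemma sw2_Cons[simp]: "sw2 (p # T) F = F (fst p) (snd p) + sw2 T F"
  by (simp add: sw2_def split: prod.split)
lemma sw2_append[simp]: "sw2 (T @ T') F = sw2 T F + sw2 T' F" by (simp add: sw2_def)
lemma sw3_Nil[simp]: "sw3 [] F = 0" by (simp add: sw3_def)
lemma sw3_Cons[simp]: "sw3 (p # T) F = F (fst p) (fst (snd p)) (snd (snd p)) + sw3 T F"
  by (simp add: sw3_def split: prod.split)
lemma sw3_append[simp]: "sw3 (T @ T') F = sw3 T F + sw3 T' F" by (simp add: sw3_def)

lemma lin_sw2: "Vector_Spaces.linear s1 s2 h \<Longrightarrow> h (sw2 T F) = sw2 T (\<lambda>x y. h (F x y))"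
  by (induction T) (auto simp: linear_zero linear_add)
lemma lin_sw3: "Vector_Spaces.linear s1 s2 h \<Longrightarrow> h (sw3 T F) = sw3 T (\<lambda>x y z. h (F x y z))"
  by (induction T) (auto simp: linear_zero linear_add)
lemma sw2_add: "sw2 T (\<lambda>x y. F x y + G x y) = sw2 T F + sw2 T G"
  by (induction T) (auto simp: algebra_simps)
lemma sw2_zero[simp]: "sw2 T (\<lambda>x y. 0) = 0" by (induction T) auto
lemma sw3_zero[simp]: "sw3 T (\<lambda>x y z. 0) = 0" by (induction T) auto
lemma lin_comp: "Vector_Spaces.linear s1 s2 f \<Longrightarrow> Vector_Spaces.linear s2 s3 g \<Longrightarrow> Vector_Spaces.linear s1 s3 (\<lambda>x. g (f x))"
  using Vector_Spaces.linear_compose[of s1 s2 f s3 g] by (simp add: comp_def)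
lemma sw2_swap: "sw2 T (\<lambda>a b. sw2 T' (\<lambda>c d. F a b c d)) = sw2 T' (\<lambda>c d. sw2 T (\<lambda>a b. F a b c d))"
  by (induction T) (auto simp: sw2_add)
lemma sw2_multL: "(c::'a::ring) * sw2 T F = sw2 T (\<lambda>x y. c * F x y)"
  by (induction T) (auto simp: algebra_simps)
lemma sw2_multR: "sw2 T F * (c::'a::ring) = sw2 T (\<lambda>x y. F x y * c)"
  by (induction T) (auto simp: algebra_simps)

lemma lin_sw2_fun:
  assumes "vector_space s1" "vector_space s2" "\<And>u v. Vector_Spaces.linear s1 s2 (G u v)"
  shows "Vector_Spaces.linear s1 s2 (\<lambda>z. sw2 T (\<lambda>u v. G u v z))"
proof (rule linearI[OF assms(1,2)])
  fix x y show "sw2 T (\<lambda>u v. G u v (x + y)) = sw2 T (\<lambda>u v. G u v x) + sw2 T (\<lambda>u v. G u v y)"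
  proof -
    have "(\<lambda>u v. G u v (x + y)) = (\<lambda>u v. G u v x + G u v y)" by (simp add: linear_add[OF assms(3)])
    then show ?thesis by (simp add: sw2_add)
  qed
next
  fix c x
  have "s2 c (sw2 T (\<lambda>u v. G u v x)) = sw2 T (\<lambda>u v. s2 c (G u v x))"
    by (rule lin_sw2[of s2 s2]) (use assms(2) in \<open>auto intro!: linearI simp: vector_space.vector_space_assms mult.commute\<close>)
  then show "sw2 T (\<lambda>u v. G u v (s1 c x)) = s2 c (sw2 T (\<lambda>u v. G u v x))"
    by (simp add: linear_scale[OF assms(3)])
qed

lemma sep2:
  assumes vs2: "vector_space s2" and t: "teq2 s1 T T'" and b: "bil s1 s2 F"
  shows "sw2 T F = sw2 T' F"
proof (rule sep_eq[OF vs2])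
  fix \<phi> assume l: "Vector_Spaces.linear s2 (*) \<phi>"
  have "bilinear_form s1 (\<lambda>x y. \<phi> (F x y))"
    using b l unfolding bil_def bilinear_form_def
    by (auto intro: lin_comp)
  then have "sw2 T (\<lambda>x y. \<phi> (F x y)) = sw2 T' (\<lambda>x y. \<phi> (F x y))"
    using t by (simp add: teq2_def)
  then show "\<phi> (sw2 T F) = \<phi> (sw2 T' F)" by (simp add: lin_sw2[OF l])
qed

lemma sep3:
  assumes vs2: "vector_space s2" and t: "teq3 s1 T T'" and b: "tril s1 s2 F"
  shows "sw3 T F = sw3 T' F"
proof (rule sep_eq[OF vs2])
  fix \<phi> assume l: "Vector_Spaces.linear s2 (*) \<phi>"
  have "trilinear_form s1 (\<lambda>x y z. \<phi> (F x y z))"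
    unfolding trilinear_form_def
    by (intro conjI allI; rule lin_comp[OF _ l]; use b in \<open>simp add: tril_def\<close>)
  then have "sw3 T (\<lambda>x y z. \<phi> (F x y z)) = sw3 T' (\<lambda>x y z. \<phi> (F x y z))"
    using t by (simp add: teq3_def)
  then show "\<phi> (sw3 T F) = \<phi> (sw3 T' F)" by (simp add: lin_sw3[OF l])
qed

lemma sw3_left: "sw3 (comul2_left D a) G = sw2 (D a) (\<lambda>x z. sw2 (D x) (\<lambda>u v. G u v z))"
proof -
  have "\<And>z. sw3 (map (\<lambda>(u, v). (u, v, z)) T) G = sw2 T (\<lambda>u v. G u v z)" for T
    by (induction T) auto
  then have "sw3 (concat (map (\<lambda>(x, z). map (\<lambda>(u, v). (u, v, z)) (D x)) T)) G = sw2 T (\<lambda>x z. sw2 (D x) (\<lambda>u v. G u v z))" for T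
    by (induction T) (auto split: prod.split)
  then show ?thesis unfolding comul2_left_def by blast
qed
lemma sw3_right: "sw3 (comul2_right D a) G = sw2 (D a) (\<lambda>x y. sw2 (D y) (\<lambda>u v. G x u v))"
proof -
  have "\<And>x. sw3 (map (\<lambda>(u, v). (x, u, v)) T) G = sw2 T (\<lambda>u v. G x u v)" for T
    by (induction T) auto
  then have "sw3 (concat (map (\<lambda>(x, y). map (\<lambda>(u, v). (x, u, v)) (D y)) T)) G = sw2 T (\<lambda>x y. sw2 (D y) (\<lambda>u v. G x u v))" for T
    by (induction T) (auto split: prod.split)
  then show ?thesis unfolding comul2_right_def by blast
qed
lemma sw2_tmul: "sw2 (tmul m T T') F = sw2 T (\<lambda>u v. sw2 T' (\<lambda>u' v'. F (m u u') (m v v')))"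
proof -
  have "\<And>u v. sw2 (map (\<lambda>(u', v'). (m u u', m v v')) T') F = sw2 T' (\<lambda>u' v'. F (m u u') (m v v'))"
    by (induction T') auto
  then show ?thesis unfolding tmul_def by (induction T) (auto split: prod.split)
qed


lemma lin_scale_const: "vector_space s \<Longrightarrow> Vector_Spaces.linear s s (\<lambda>x. s c x)"
  by (auto intro!: linearI simp: vector_space.vector_space_assms mult.commute)
lemma lin_scale_fun: "vector_space s \<Longrightarrow> Vector_Spaces.linear s1 s f \<Longrightarrow> Vector_Spaces.linear s1 s (\<lambda>x. s c (f x))"
  by (rule lin_comp[OF _ lin_scale_const])
lemma lin_id: "vector_space s \<Longrightarrow> Vector_Spaces.linear s s (\<lambda>x. x)"
  by (auto intro!: linearI)
lemma lin_add: "Vector_Spaces.linear s1 s2 f \<Longrightarrow> Vector_Spaces.linear s1 s2 g \<Longrightarrow> Vector_Spaces.linear s1 s2 (\<lambda>x. f x + g x)"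
  by (rule linearI) (auto simp: linear_add linear_scale linear_vs1 linear_vs2 vector_space.vector_space_assms)
lemma bil_lin1: "bil s1 s2 F \<Longrightarrow> Vector_Spaces.linear s1 s2 (\<lambda>y. F x y)" by (simp add: bil_def)
lemma bil_lin2: "bil s1 s2 F \<Longrightarrow> Vector_Spaces.linear s1 s2 (\<lambda>x. F x y)" by (simp add: bil_def)
lemma tril_lin1: "tril s1 s2 F \<Longrightarrow> Vector_Spaces.linear s1 s2 (\<lambda>x. F x y z)" by (simp add: tril_def)
lemma tril_lin2: "tril s1 s2 F \<Longrightarrow> Vector_Spaces.linear s1 s2 (\<lambda>y. F x y z)" by (simp add: tril_def)
lemma tril_lin3: "tril s1 s2 F \<Longrightarrow> Vector_Spaces.linear s1 s2 (\<lambda>z. F x y z)" by (simp add: tril_def)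
lemma bilI: "(\<And>x. Vector_Spaces.linear s1 s2 (\<lambda>y. F x y)) \<Longrightarrow> (\<And>y. Vector_Spaces.linear s1 s2 (\<lambda>x. F x y)) \<Longrightarrow> bil s1 s2 F"
  by (simp add: bil_def)
lemma trilI: "(\<And>y z. Vector_Spaces.linear s1 s2 (\<lambda>x. F x y z)) \<Longrightarrow> (\<And>x z. Vector_Spaces.linear s1 s2 (\<lambda>y. F x y z))
  \<Longrightarrow> (\<And>x y. Vector_Spaces.linear s1 s2 (\<lambda>z. F x y z)) \<Longrightarrow> tril s1 s2 F"
  by (simp add: tril_def)

lemma sw2_map_pair: "sw2 (map (\<lambda>(u, v). (f u, g v)) T) F = sw2 T (\<lambda>u v. F (f u) (g v))"
  by (induction T) auto
lemma sw2_map_swap: "sw2 (map (\<lambda>(u, v). (v, u)) T) F = sw2 T (\<lambda>u v. F v u)"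
  by (induction T) auto

locale RB =
  fixes sc :: "'k::field_char_0 \<Rightarrow> 'h::ring_1 \<Rightarrow> 'h"
    and D :: "'h \<Rightarrow> ('h \<times> 'h) list" and \<epsilon> :: "'h \<Rightarrow> 'k" and S B1 B2 :: "'h \<Rightarrow> 'h"
  assumes rbs: "rota_baxter_system sc D \<epsilon> S B1 B2"
begin

lemma hopf: "hopf_algebra sc D \<epsilon> S" using rbs by (simp add: rota_baxter_system_def)
lemma vs: "vector_space sc" using hopf by (simp add: hopf_algebra_def)
lemma sc_multL: "sc c (x * y) = sc c x * y" using hopf unfolding hopf_algebra_def by blast
lemma sc_multR: "sc c (x * y) = x * sc c y" using hopf unfolding hopf_algebra_def by blast
lemma eps_lin: "Vector_Spaces.linear sc (*) \<epsilon>" using hopf by (simp add: hopf_algebra_def)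
lemma D_add: "teq2 sc (D (x + y)) (D x @ D y)" using hopf by (simp add: hopf_algebra_def)
lemma D_sc: "teq2 sc (D (sc c x)) (map (\<lambda>(u, v). (sc c u, v)) (D x))" using hopf by (simp add: hopf_algebra_def)
lemma coass: "teq3 sc (comul2_left D x) (comul2_right D x)" using hopf by (simp add: hopf_algebra_def)
lemma counitL: "sw2 (D x) (\<lambda>u v. sc (\<epsilon> u) v) = x" using hopf by (simp add: hopf_algebra_def)
lemma counitR: "sw2 (D x) (\<lambda>u v. sc (\<epsilon> v) u) = x" using hopf by (simp add: hopf_algebra_def)
lemma D_mult: "teq2 sc (D (x * y)) (tmul (*) (D x) (D y))" using hopf by (simp add: hopf_algebra_def)
lemma D_one: "teq2 sc (D 1) [(1, 1)]" using hopf by (simp add: hopf_algebra_def)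
lemma eps_mult: "\<epsilon> (x * y) = \<epsilon> x * \<epsilon> y" using hopf by (simp add: hopf_algebra_def)
lemma eps_one: "\<epsilon> 1 = 1" using hopf by (simp add: hopf_algebra_def)
lemma S_lin: "Vector_Spaces.linear sc sc S" using hopf by (simp add: hopf_algebra_def)
lemma antiL: "sw2 (D x) (\<lambda>u v. S u * v) = sc (\<epsilon> x) 1" using hopf by (simp add: hopf_algebra_def)
lemma antiR: "sw2 (D x) (\<lambda>u v. u * S v) = sc (\<epsilon> x) 1" using hopf by (simp add: hopf_algebra_def)
lemma cocomm: "teq2 sc (D x) (map (\<lambda>(u, v). (v, u)) (D x))"
  using rbs by (simp add: rota_baxter_system_def cocommutative_def)
lemma B1_hom: "coalg_hom sc D \<epsilon> B1" using rbs by (simp add: rota_baxter_system_def)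
lemma B2_hom: "coalg_hom sc D \<epsilon> B2" using rbs by (simp add: rota_baxter_system_def)
lemma B1_one: "B1 1 = 1" using rbs by (simp add: rota_baxter_system_def)
lemma B2_one: "B2 1 = 1" using rbs by (simp add: rota_baxter_system_def)
lemma RB1: "B1 a * B1 b = B1 (desc D S B1 B2 a b)" using rbs by (simp add: rota_baxter_system_def)
lemma RB2: "B2 a * B2 b = B2 (desc D S B1 B2 a b)" using rbs by (simp add: rota_baxter_system_def)
lemma B1_lin: "Vector_Spaces.linear sc sc B1" using B1_hom by (simp add: coalg_hom_def)
lemma B2_lin: "Vector_Spaces.linear sc sc B2" using B2_hom by (simp add: coalg_hom_def)
lemma eps_B1: "\<epsilon> (B1 x) = \<epsilon> x" using B1_hom by (simp add: coalg_hom_def)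
lemma eps_B2: "\<epsilon> (B2 x) = \<epsilon> x" using B2_hom by (simp add: coalg_hom_def)

lemma vsK': "vector_space ((*) :: 'k \<Rightarrow> 'k \<Rightarrow> 'k)" by (rule vsK)

lemma lin_multR: "Vector_Spaces.linear sc sc f \<Longrightarrow> Vector_Spaces.linear sc sc (\<lambda>x. f x * c)"
  by (rule linearI[OF vs vs]) (auto simp: linear_add linear_scale distrib_right sc_multL)
lemma lin_multL: "Vector_Spaces.linear sc sc f \<Longrightarrow> Vector_Spaces.linear sc sc (\<lambda>x. c * f x)"
  by (rule linearI[OF vs vs]) (auto simp: linear_add linear_scale distrib_left sc_multR)
lemma lin_S: "Vector_Spaces.linear sc sc f \<Longrightarrow> Vector_Spaces.linear sc sc (\<lambda>x. S (f x))"
  by (rule lin_comp[OF _ S_lin])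
lemma lin_B1: "Vector_Spaces.linear sc sc f \<Longrightarrow> Vector_Spaces.linear sc sc (\<lambda>x. B1 (f x))"
  by (rule lin_comp[OF _ B1_lin])
lemma lin_B2: "Vector_Spaces.linear sc sc f \<Longrightarrow> Vector_Spaces.linear sc sc (\<lambda>x. B2 (f x))"
  by (rule lin_comp[OF _ B2_lin])
lemma lin_eps: "Vector_Spaces.linear sc sc f \<Longrightarrow> Vector_Spaces.linear sc (*) (\<lambda>x. \<epsilon> (f x))"
  by (rule lin_comp[OF _ eps_lin])
lemma lin_idH: "Vector_Spaces.linear sc sc (\<lambda>x. x)" by (rule lin_id[OF vs])
lemma lin_scale_left: "vector_space s2 \<Longrightarrow> Vector_Spaces.linear sc (*) g \<Longrightarrow> Vector_Spaces.linear sc s2 (\<lambda>x. s2 (g x) v)"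
  by (rule linearI[OF vs]) (auto simp: linear_add linear_scale vector_space.vector_space_assms)
lemma lin_F1: "bil sc s2 F \<Longrightarrow> Vector_Spaces.linear sc sc f \<Longrightarrow> Vector_Spaces.linear sc s2 (\<lambda>x. F (f x) y)"
  by (rule lin_comp[of sc sc f s2 "\<lambda>x. F x y"]) (auto simp: bil_def)
lemma lin_F2: "bil sc s2 F \<Longrightarrow> Vector_Spaces.linear sc sc f \<Longrightarrow> Vector_Spaces.linear sc s2 (\<lambda>x. F y (f x))"
  by (rule lin_comp[of sc sc f s2 "F y"]) (auto simp: bil_def)

lemma D_lin: assumes vs2: "vector_space s2" and b: "bil sc s2 F"
  shows "Vector_Spaces.linear sc s2 (\<lambda>x. sw2 (D x) F)"
proof (rule linearI[OF vs vs2])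
  fix x y show "sw2 (D (x + y)) F = sw2 (D x) F + sw2 (D y) F"
    using sep2[OF vs2 D_add b] by simp
next
  fix c x
  have "sw2 (D (sc c x)) F = sw2 (D x) (\<lambda>u v. F (sc c u) v)"
    using sep2[OF vs2 D_sc b] sw2_map_pair[of "sc c" "\<lambda>v. v"] by simp
  also have "\<dots> = sw2 (D x) (\<lambda>u v. s2 c (F u v))"
    by (simp add: linear_scale[OF bil_lin2[OF b]])
  also have "\<dots> = s2 c (sw2 (D x) F)"
    by (rule lin_sw2[OF lin_scale_const[OF vs2], symmetric])
  finally show "sw2 (D (sc c x)) F = s2 c (sw2 (D x) F)" .
qed

lemma lin_D: "vector_space s2 \<Longrightarrow> bil sc s2 F \<Longrightarrow> Vector_Spaces.linear sc sc f \<Longrightarrow> Vector_Spaces.linear sc s2 (\<lambda>x. sw2 (D (f x)) F)"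
  by (rule lin_comp[OF _ D_lin])
lemma lin_sw: "vector_space s2 \<Longrightarrow> (\<And>u v. Vector_Spaces.linear sc s2 (\<lambda>z. G u v z)) \<Longrightarrow> Vector_Spaces.linear sc s2 (\<lambda>z. sw2 T (\<lambda>u v. G u v z))"
  by (rule lin_sw2_fun[OF vs])

lemma lin_scH: "Vector_Spaces.linear sc sc f \<Longrightarrow> Vector_Spaces.linear sc sc (\<lambda>x. sc c (f x))"
  by (rule lin_scale_fun[OF vs])
lemmas linI = vs vsK' lin_multR lin_multL lin_S lin_B1 lin_B2 lin_eps lin_idH lin_scale_left
  lin_D lin_sw lin_add lin_scH bilI trilI

lemma coassoc: assumes vs2: "vector_space s2" and t: "tril sc s2 G"
  shows "sw2 (D a) (\<lambda>x z. sw2 (D x) (\<lambda>u v. G u v z)) = sw2 (D a) (\<lambda>x y. sw2 (D y) (\<lambda>u v. G x u v))"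
  using sep3[OF vs2 coass t] by (simp add: sw3_left sw3_right)

lemma cocommV: assumes vs2: "vector_space s2" and b: "bil sc s2 F"
  shows "sw2 (D a) F = sw2 (D a) (\<lambda>x y. F y x)"
  using sep2[OF vs2 cocomm b] by (simp add: sw2_map_swap)

lemma counitLV: assumes h: "Vector_Spaces.linear sc s2 h"
  shows "sw2 (D a) (\<lambda>x y. s2 (\<epsilon> x) (h y)) = h a"
proof -
  have "h a = h (sw2 (D a) (\<lambda>u v. sc (\<epsilon> u) v))" by (simp add: counitL)
  also have "\<dots> = sw2 (D a) (\<lambda>x y. s2 (\<epsilon> x) (h y))" by (simp add: lin_sw2[OF h] linear_scale[OF h])
  finally show ?thesis by simp
qed
lemma counitRV: assumes h: "Vector_Spaces.linear sc s2 h"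
  shows "sw2 (D a) (\<lambda>x y. s2 (\<epsilon> y) (h x)) = h a"
proof -
  have "h a = h (sw2 (D a) (\<lambda>u v. sc (\<epsilon> v) u))" by (simp add: counitR)
  also have "\<dots> = sw2 (D a) (\<lambda>x y. s2 (\<epsilon> y) (h x))" by (simp add: lin_sw2[OF h] linear_scale[OF h])
  finally show ?thesis by simp
qed

lemma DmultV: assumes vs2: "vector_space s2" and b: "bil sc s2 F"
  shows "sw2 (D (x * y)) F = sw2 (D x) (\<lambda>a b. sw2 (D y) (\<lambda>c d. F (a * c) (b * d)))"
  using sep2[OF vs2 D_mult b] by (simp add: sw2_tmul)
lemma DoneV: assumes vs2: "vector_space s2" and b: "bil sc s2 F"
  shows "sw2 (D 1) F = F 1 1"
  using sep2[OF vs2 D_one b] by simp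
lemma DhomV: assumes h: "coalg_hom sc D \<epsilon> B" and vs2: "vector_space s2" and b: "bil sc s2 F"
  shows "sw2 (D (B x)) F = sw2 (D x) (\<lambda>u v. F (B u) (B v))"
  using sep2[OF vs2 _ b, of "D (B x)" "map (\<lambda>(u, v). (B u, B v)) (D x)"] h
  by (simp add: coalg_hom_def sw2_map_pair)


lemma test1: "bil sc sc (\<lambda>x y. B1 x * b * S (B2 y))"
  by (auto intro!: linI)
lemma swap4_aux:
  assumes vs2: "vector_space s2"
    and l1: "\<And>q r t. Vector_Spaces.linear sc s2 (\<lambda>p. \<Psi> p q r t)"
    and l2: "\<And>p r t. Vector_Spaces.linear sc s2 (\<lambda>q. \<Psi> p q r t)"
    and l3: "\<And>p q t. Vector_Spaces.linear sc s2 (\<lambda>r. \<Psi> p q r t)"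
    and l4: "\<And>p q r. Vector_Spaces.linear sc s2 (\<lambda>t. \<Psi> p q r t)"
  shows "sw2 (D a) (\<lambda>x y. sw2 (D x) (\<lambda>p q. sw2 (D y) (\<lambda>r t. \<Psi> p q r t)))
       = sw2 (D a) (\<lambda>p y. sw2 (D y) (\<lambda>m t. sw2 (D m) (\<lambda>q r. \<Psi> p q r t)))"
proof -
  have "sw2 (D a) (\<lambda>x y. sw2 (D x) (\<lambda>p q. sw2 (D y) (\<lambda>r t. \<Psi> p q r t)))
      = sw2 (D a) (\<lambda>p y. sw2 (D y) (\<lambda>q w. sw2 (D w) (\<lambda>r t. \<Psi> p q r t)))"
    by (rule coassoc[OF vs2, of "\<lambda>p q y. sw2 (D y) (\<lambda>r t. \<Psi> p q r t)"])
      (auto intro!: linI vs2 l1 l2 l3 l4)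
  also have "\<dots> = sw2 (D a) (\<lambda>p y. sw2 (D y) (\<lambda>m t. sw2 (D m) (\<lambda>q r. \<Psi> p q r t)))"
  proof -
    have "sw2 (D y) (\<lambda>q w. sw2 (D w) (\<lambda>r t. \<Psi> p q r t)) = sw2 (D y) (\<lambda>m t. sw2 (D m) (\<lambda>q r. \<Psi> p q r t))" for p y
      by (rule coassoc[OF vs2, of "\<lambda>q r t. \<Psi> p q r t", symmetric])
        (auto intro!: linI vs2 l1 l2 l3 l4)
    then show ?thesis by simp
  qed
  finally show ?thesis .
qed

lemma swap4:
  assumes vs2: "vector_space s2"
    and l1: "\<And>q r t. Vector_Spaces.linear sc s2 (\<lambda>p. \<Psi> p q r t)"
    and l2: "\<And>p r t. Vector_Spaces.linear sc s2 (\<lambda>q. \<Psi> p q r t)"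
    and l3: "\<And>p q t. Vector_Spaces.linear sc s2 (\<lambda>r. \<Psi> p q r t)"
    and l4: "\<And>p q r. Vector_Spaces.linear sc s2 (\<lambda>t. \<Psi> p q r t)"
  shows "sw2 (D a) (\<lambda>x y. sw2 (D x) (\<lambda>p q. sw2 (D y) (\<lambda>r t. \<Psi> p q r t)))
       = sw2 (D a) (\<lambda>x y. sw2 (D x) (\<lambda>p r. sw2 (D y) (\<lambda>q t. \<Psi> p q r t)))"
proof -
  have A: "sw2 (D a) (\<lambda>x y. sw2 (D x) (\<lambda>p q. sw2 (D y) (\<lambda>r t. \<Psi> p r q t)))
       = sw2 (D a) (\<lambda>p y. sw2 (D y) (\<lambda>m t. sw2 (D m) (\<lambda>q r. \<Psi> p r q t)))"
    by (rule swap4_aux[OF vs2]) (auto intro: l1 l2 l3 l4)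
  have B: "sw2 (D m) (\<lambda>q r. \<Psi> p r q t) = sw2 (D m) (\<lambda>q r. \<Psi> p q r t)" for p m t
    by (rule cocommV[OF vs2, symmetric]) (auto intro!: linI l2 l3)
  show ?thesis using swap4_aux[OF vs2 l1 l2 l3 l4, of a] A by (simp add: B)
qed


definition conv :: "('h \<Rightarrow> 'h) \<Rightarrow> ('h \<Rightarrow> 'h) \<Rightarrow> 'h \<Rightarrow> 'h" where
  "conv f g x = sw2 (D x) (\<lambda>u v. f u * g v)"

definition unit :: "'h \<Rightarrow> 'h" where "unit x = sc (\<epsilon> x) 1"

lemma lin_unit: "Vector_Spaces.linear sc sc unit"
  unfolding unit_def by (auto intro!: linI lin_comp[OF _ eps_lin])

lemma lin_conv: "Vector_Spaces.linear sc sc f \<Longrightarrow> Vector_Spaces.linear sc sc g \<Longrightarrow> Vector_Spaces.linear sc sc (conv f g)"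
  unfolding conv_def by (auto intro!: linI intro: lin_comp)

lemma conv_assoc:
  assumes f: "Vector_Spaces.linear sc sc f" and g: "Vector_Spaces.linear sc sc g" and h: "Vector_Spaces.linear sc sc h"
  shows "conv (conv f g) h = conv f (conv g h)"
proof
  fix x
  have "conv (conv f g) h x = sw2 (D x) (\<lambda>w z. sw2 (D w) (\<lambda>u v. f u * g v * h z))"
    by (simp add: conv_def sw2_multR)
  also have "\<dots> = sw2 (D x) (\<lambda>u y. sw2 (D y) (\<lambda>v z. f u * g v * h z))"
    by (rule coassoc[OF vs]) (auto intro!: linI intro: lin_comp f g h)
  also have "\<dots> = conv f (conv g h) x"
    by (simp add: conv_def sw2_multL mult.assoc)
  finally show "conv (conv f g) h x = conv f (conv g h) x" .
qed

lemma conv_unitL: "Vector_Spaces.linear sc sc f \<Longrightarrow> conv unit f = f"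
proof
  fix x assume f: "Vector_Spaces.linear sc sc f"
  have "conv unit f x = sw2 (D x) (\<lambda>u v. sc (\<epsilon> u) (f v))"
    by (simp add: conv_def unit_def sc_multL[symmetric])
  also have "\<dots> = f x" by (rule counitLV[OF f])
  finally show "conv unit f x = f x" .
qed

lemma conv_unitR: "Vector_Spaces.linear sc sc f \<Longrightarrow> conv f unit = f"
proof
  fix x assume f: "Vector_Spaces.linear sc sc f"
  have "conv f unit x = sw2 (D x) (\<lambda>u v. sc (\<epsilon> v) (f u))"
    by (simp add: conv_def unit_def sc_multR[symmetric])
  also have "\<dots> = f x" by (rule counitRV[OF f])
  finally show "conv f unit x = f x" .
qed

lemma conv_multR: "conv f (\<lambda>x. g x * c) = (\<lambda>x. conv f g x * c)"
  by (auto simp: conv_def sw2_multR mult.assoc)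

lemma conv_hom_antiL: assumes h: "coalg_hom sc D \<epsilon> B"
  shows "conv (\<lambda>x. S (B x)) B = unit"
proof
  fix x
  have "conv (\<lambda>x. S (B x)) B x = sw2 (D (B x)) (\<lambda>u v. S u * v)"
    unfolding conv_def by (rule DhomV[OF h vs, symmetric]) (auto intro!: linI)
  then show "conv (\<lambda>x. S (B x)) B x = unit x"
    using h by (simp add: antiL unit_def coalg_hom_def)
qed
lemma conv_hom_antiR: assumes h: "coalg_hom sc D \<epsilon> B"
  shows "conv B (\<lambda>x. S (B x)) = unit"
proof
  fix x
  have "conv B (\<lambda>x. S (B x)) x = sw2 (D (B x)) (\<lambda>u v. u * S v)"
    unfolding conv_def by (rule DhomV[OF h vs, symmetric]) (auto intro!: linI)
  then show "conv B (\<lambda>x. S (B x)) x = unit x"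
    using h by (simp add: antiR unit_def coalg_hom_def)
qed

lemma eps_S: "\<epsilon> (S x) = \<epsilon> x"
proof -
  have "\<epsilon> (sw2 (D x) (\<lambda>u v. S u * v)) = sw2 (D x) (\<lambda>u v. \<epsilon> v * \<epsilon> (S u))"
    by (simp add: lin_sw2[OF eps_lin] eps_mult mult.commute)
  also have "\<dots> = \<epsilon> (S x)"
    by (rule counitRV) (auto intro!: linI)
  finally show ?thesis by (simp add: antiL linear_scale[OF eps_lin] eps_one)
qed

lemma S_one: "S 1 = 1"
proof -
  have "sw2 (D 1) (\<lambda>u v. S u * v) = S 1 * 1"
    by (rule DoneV[OF vs]) (auto intro!: linI)
  then show ?thesis by (simp add: antiL eps_one vector_space.vector_space_assms[OF vs])
qed


lemma sw2_cong_fun: assumes "\<And>x y. F x y = G x y" shows "sw2 T F = sw2 T G"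
proof -
  have "F = G" using assms by (intro ext)
  then show ?thesis by simp
qed

lemma contractR: assumes h: "Vector_Spaces.linear sc s2 h"
  shows "sw2 (D x) (\<lambda>p r. h (P * p * S r)) = s2 (\<epsilon> x) (h P)"
proof -
  have l: "Vector_Spaces.linear sc s2 (\<lambda>w. h (P * w))" by (rule lin_comp[OF lin_multL[OF lin_idH] h])
  have "sw2 (D x) (\<lambda>p r. h (P * p * S r)) = h (P * sw2 (D x) (\<lambda>p r. p * S r))"
    by (simp add: lin_sw2[OF l] mult.assoc)
  also have "\<dots> = h (sc (\<epsilon> x) P)" by (simp add: antiR sc_multR[symmetric])
  finally show ?thesis by (simp add: linear_scale[OF h])
qed
lemma contractL: assumes h: "Vector_Spaces.linear sc s2 h"
  shows "sw2 (D x) (\<lambda>p r. h (P * S p * r)) = s2 (\<epsilon> x) (h P)"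
proof -
  have l: "Vector_Spaces.linear sc s2 (\<lambda>w. h (P * w))" by (rule lin_comp[OF lin_multL[OF lin_idH] h])
  have "sw2 (D x) (\<lambda>p r. h (P * S p * r)) = h (P * sw2 (D x) (\<lambda>p r. S p * r))"
    by (simp add: lin_sw2[OF l] mult.assoc)
  also have "\<dots> = h (sc (\<epsilon> x) P)" by (simp add: antiL sc_multR[symmetric])
  finally show ?thesis by (simp add: linear_scale[OF h])
qed

lemma DS: assumes vs2: "vector_space s2" and b: "bil sc s2 F"
  shows "sw2 (D (S x)) F = sw2 (D x) (\<lambda>u v. F (S u) (S v))"
proof -
  have F1: "\<And>f y. Vector_Spaces.linear sc sc f \<Longrightarrow> Vector_Spaces.linear sc s2 (\<lambda>x. F (f x) y)"
    by (rule lin_F1[OF b])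
  have F2: "\<And>f y. Vector_Spaces.linear sc sc f \<Longrightarrow> Vector_Spaces.linear sc s2 (\<lambda>x. F y (f x))"
    by (rule lin_F2[OF b])
  have key: "s2 (\<epsilon> bb) (F P Q) = sw2 (D bb) (\<lambda>b1 b2. sw2 (D b1) (\<lambda>c d. sw2 (D b2) (\<lambda>e f. F (P*c*S e) (Q*d*S f))))" for bb P Q
  proof -
    have "sw2 (D bb) (\<lambda>b1 b2. sw2 (D b1) (\<lambda>c d. sw2 (D b2) (\<lambda>e f. F (P*c*S e) (Q*d*S f))))
        = sw2 (D bb) (\<lambda>x y. sw2 (D x) (\<lambda>p r. sw2 (D y) (\<lambda>q t. F (P*p*S r) (Q*q*S t))))"
      apply (rule swap4[OF vs2, where \<Psi> = "\<lambda>p q r t. F (P*p*S r) (Q*q*S t)"])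
      by (rule F1 F2, (rule lin_multR lin_multL lin_S lin_idH)+)+
    also have "\<dots> = sw2 (D bb) (\<lambda>x y. sw2 (D y) (\<lambda>q t. sw2 (D x) (\<lambda>p r. F (P*p*S r) (Q*q*S t))))"
      by (rule sw2_cong_fun, rule sw2_swap)
    also have "\<dots> = sw2 (D bb) (\<lambda>x y. sw2 (D y) (\<lambda>q t. s2 (\<epsilon> x) (F P (Q*q*S t))))"
      by (simp add: contractR[OF F1[OF lin_idH]])
    also have "\<dots> = sw2 (D bb) (\<lambda>x y. s2 (\<epsilon> x) (s2 (\<epsilon> y) (F P Q)))"
      by (simp add: lin_sw2[OF lin_scale_const[OF vs2], symmetric] contractR[OF F2[OF lin_idH]])
    also have "\<dots> = s2 (\<epsilon> bb) (F P Q)"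
      by (rule counitLV) (auto intro!: linI vs2)
    finally show ?thesis by simp
  qed
  define K where "K b2 U V = sw2 (D b2) (\<lambda>e f. F (U * S e) (V * S f))" for b2 U V
  have Kb: "bil sc s2 (K b2)" for b2 unfolding K_def by (auto intro!: linI vs2 F1 F2)
  have "sw2 (D (S x)) F = sw2 (D x) (\<lambda>a bb. s2 (\<epsilon> bb) (sw2 (D (S a)) F))"
    by (rule counitRV[symmetric]) (auto intro!: linI vs2 b)
  also have "\<dots> = sw2 (D x) (\<lambda>a bb. sw2 (D (S a)) (\<lambda>P Q. s2 (\<epsilon> bb) (F P Q)))"
    by (simp add: lin_sw2[OF lin_scale_const[OF vs2]])
  also have "\<dots> = sw2 (D x) (\<lambda>a bb. sw2 (D (S a)) (\<lambda>P Q. sw2 (D bb) (\<lambda>b1 b2. sw2 (D b1) (\<lambda>c d. sw2 (D b2) (\<lambda>e f. F (P*c*S e) (Q*d*S f))))))"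
    by (simp only: key)
  also have "\<dots> = sw2 (D x) (\<lambda>a bb. sw2 (D bb) (\<lambda>b1 b2. sw2 (D (S a)) (\<lambda>P Q. sw2 (D b1) (\<lambda>c d. sw2 (D b2) (\<lambda>e f. F (P*c*S e) (Q*d*S f))))))"
    by (rule sw2_cong_fun, rule sw2_swap)
  also have "\<dots> = sw2 (D x) (\<lambda>y b2. sw2 (D y) (\<lambda>a b1. sw2 (D (S a)) (\<lambda>P Q. sw2 (D b1) (\<lambda>c d. sw2 (D b2) (\<lambda>e f. F (P*c*S e) (Q*d*S f))))))"
    by (rule coassoc[OF vs2, symmetric]) (auto intro!: linI vs2 F1 F2)
  also have "\<dots> = sw2 (D x) (\<lambda>y b2. sw2 (D y) (\<lambda>a b1. sw2 (D (S a * b1)) (K b2)))"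
    by (simp add: DmultV[OF vs2 Kb] K_def)
  also have "\<dots> = sw2 (D x) (\<lambda>y b2. sw2 (D (sw2 (D y) (\<lambda>a b1. S a * b1))) (K b2))"
    by (simp add: lin_sw2[OF D_lin[OF vs2 Kb]])
  also have "\<dots> = sw2 (D x) (\<lambda>y b2. s2 (\<epsilon> y) (K b2 1 1))"
    by (simp add: antiL linear_scale[OF D_lin[OF vs2 Kb]] DoneV[OF vs2 Kb])
  also have "\<dots> = sw2 (D x) (\<lambda>u v. F (S u) (S v))"
    unfolding K_def mult_1_left by (rule counitLV) (auto intro!: linI vs2 F1 F2)
  finally show ?thesis .
qed



lemma sc_comm: "sc a (sc b v) = sc b (sc a v)"
  by (simp add: vector_space.vector_space_assms(3)[OF vs] mult.commute)
lemma sc_one_mult: "sc a 1 * v = sc a v" by (simp add: sc_multL[symmetric])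
lemma mult_sc_one: "v * sc a 1 = sc a v" by (simp add: sc_multR[symmetric])

lemma S_anti: "S (x * y) = S y * S x"
proof -
  have E0: "S (x * y) = sw2 (D x) (\<lambda>x1 x2. sw2 (D y) (\<lambda>y1 y2. S (x1 * y1) * sc (\<epsilon> x2) (sc (\<epsilon> y2) 1)))"
  proof -
    have i: "sw2 (D y) (\<lambda>y1 y2. S (x1 * y1) * sc (\<epsilon> x2) (sc (\<epsilon> y2) 1)) = sc (\<epsilon> x2) (S (x1 * y))" for x1 x2
    proof -
      have "sw2 (D y) (\<lambda>y1 y2. S (x1 * y1) * sc (\<epsilon> x2) (sc (\<epsilon> y2) 1))
          = sc (\<epsilon> x2) (sw2 (D y) (\<lambda>y1 y2. sc (\<epsilon> y2) (S (x1 * y1))))"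
        by (simp add: lin_sw2[OF lin_scale_const[OF vs]] sc_multR[symmetric] sc_comm)
      also have "sw2 (D y) (\<lambda>y1 y2. sc (\<epsilon> y2) (S (x1 * y1))) = S (x1 * y)"
        by (rule counitRV) (auto intro!: linI)
      finally show ?thesis .
    qed
    have "sw2 (D x) (\<lambda>x1 x2. sc (\<epsilon> x2) (S (x1 * y))) = S (x * y)"
      by (rule counitRV) (auto intro!: linI)
    then show ?thesis by (simp add: i)
  qed
  have E1: "sc (\<epsilon> x2) (sc (\<epsilon> y2) 1) = sw2 (D x2) (\<lambda>p q. sw2 (D y2) (\<lambda>r t. p * (r * S t) * S q))" for x2 y2
  proof -
    have "sw2 (D y2) (\<lambda>r t. p * (r * S t) * S q) = sc (\<epsilon> y2) (p * S q)" for p q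
      by (simp add: sw2_multL[symmetric] sw2_multR[symmetric] antiR sc_multL sc_multR[symmetric])
    then have "sw2 (D x2) (\<lambda>p q. sw2 (D y2) (\<lambda>r t. p * (r * S t) * S q)) = sc (\<epsilon> y2) (sc (\<epsilon> x2) 1)"
      by (simp add: lin_sw2[OF lin_scale_const[OF vs], symmetric] antiR)
    then show ?thesis by (simp add: sc_comm)
  qed
  let ?\<Phi> = "\<lambda>x1 y1 p q r t. S (x1 * y1) * (p * (r * S t) * S q)"
  have "S (x * y) = sw2 (D x) (\<lambda>x1 x2. sw2 (D y) (\<lambda>y1 y2. sw2 (D x2) (\<lambda>p q. sw2 (D y2) (\<lambda>r t. ?\<Phi> x1 y1 p q r t))))"
    by (simp add: E0 E1 sw2_multL)
  also have "\<dots> = sw2 (D x) (\<lambda>x1 x2. sw2 (D x2) (\<lambda>p q. sw2 (D y) (\<lambda>y1 y2. sw2 (D y2) (\<lambda>r t. ?\<Phi> x1 y1 p q r t))))"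
    by (rule sw2_cong_fun, rule sw2_swap)
  also have "\<dots> = sw2 (D x) (\<lambda>z q. sw2 (D z) (\<lambda>x1 p. sw2 (D y) (\<lambda>y1 y2. sw2 (D y2) (\<lambda>r t. ?\<Phi> x1 y1 p q r t))))"
    by (rule coassoc[OF vs, symmetric]) (auto intro!: linI)
  also have "\<dots> = sw2 (D x) (\<lambda>z q. sw2 (D z) (\<lambda>x1 p. sw2 (D y) (\<lambda>w t. sw2 (D w) (\<lambda>y1 r. ?\<Phi> x1 y1 p q r t))))"
  proof -
    have "sw2 (D y) (\<lambda>y1 y2. sw2 (D y2) (\<lambda>r t. ?\<Phi> x1 y1 p q r t)) = sw2 (D y) (\<lambda>w t. sw2 (D w) (\<lambda>y1 r. ?\<Phi> x1 y1 p q r t))" for x1 p q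
      by (rule coassoc[OF vs, symmetric]) (auto intro!: linI)
    then show ?thesis by simp
  qed
  also have "\<dots> = sw2 (D x) (\<lambda>z q. sw2 (D y) (\<lambda>w t. sw2 (D z) (\<lambda>x1 p. sw2 (D w) (\<lambda>y1 r. ?\<Phi> x1 y1 p q r t))))"
    by (rule sw2_cong_fun, rule sw2_swap)
  also have "\<dots> = sw2 (D x) (\<lambda>z q. sw2 (D y) (\<lambda>w t. sc (\<epsilon> z) (sc (\<epsilon> w) (S t * S q))))"
  proof -
    have "sw2 (D z) (\<lambda>x1 p. sw2 (D w) (\<lambda>y1 r. ?\<Phi> x1 y1 p q r t)) = sc (\<epsilon> z) (sc (\<epsilon> w) (S t * S q))" for z w q t
    proof -
      have "sw2 (D (z * w)) (\<lambda>u v. S u * v * (S t * S q)) = sw2 (D z) (\<lambda>x1 p. sw2 (D w) (\<lambda>y1 r. S (x1 * y1) * (p * r) * (S t * S q)))"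
        by (rule DmultV[OF vs]) (auto intro!: linI)
      also have "\<dots> = sw2 (D z) (\<lambda>x1 p. sw2 (D w) (\<lambda>y1 r. ?\<Phi> x1 y1 p q r t))"
        by (simp add: mult.assoc)
      finally have "sw2 (D z) (\<lambda>x1 p. sw2 (D w) (\<lambda>y1 r. ?\<Phi> x1 y1 p q r t)) = sw2 (D (z * w)) (\<lambda>u v. S u * v * (S t * S q))" by simp
      also have "\<dots> = sc (\<epsilon> z) (sc (\<epsilon> w) (S t * S q))"
        by (simp add: sw2_multR[symmetric] antiL eps_mult sc_one_mult vector_space.vector_space_assms(3)[OF vs])
      finally show ?thesis .
    qed
    then show ?thesis by simp
  qed
  also have "\<dots> = sw2 (D x) (\<lambda>z q. sc (\<epsilon> z) (S y * S q))"
  proof -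
    have "sw2 (D y) (\<lambda>w t. sc (\<epsilon> z) (sc (\<epsilon> w) (S t * S q))) = sc (\<epsilon> z) (S y * S q)" for z q
    proof -
      have "sw2 (D y) (\<lambda>w t. sc (\<epsilon> w) (S t * S q)) = S y * S q"
        by (rule counitLV) (auto intro!: linI)
      then show ?thesis by (simp add: lin_sw2[OF lin_scale_const[OF vs], symmetric])
    qed
    then show ?thesis by simp
  qed
  also have "\<dots> = S y * S x"
    by (rule counitLV) (auto intro!: linI)
  finally show ?thesis .
qed


abbreviation dd where "dd \<equiv> desc D S B1 B2"

lemma lin_d2: "Vector_Spaces.linear sc sc (\<lambda>b. dd x b)"
  unfolding desc_def by (auto intro!: linI)
lemma lin_d1: "Vector_Spaces.linear sc sc (\<lambda>a. dd a b)"
  unfolding desc_def by (auto intro!: linI)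

lemma eps_d: "\<epsilon> (dd a b) = \<epsilon> a * \<epsilon> b"
proof -
  have "\<epsilon> (dd a b) = sw2 (D a) (\<lambda>u v. \<epsilon> u * \<epsilon> b * \<epsilon> v)"
    by (simp add: desc_def lin_sw2[OF eps_lin] eps_mult eps_B1 eps_B2 eps_S)
  also have "\<dots> = sw2 (D a) (\<lambda>u v. \<epsilon> u * \<epsilon> v * \<epsilon> b)"
    by (simp add: mult_ac)
  also have "\<dots> = sw2 (D a) (\<lambda>u v. \<epsilon> u * \<epsilon> v) * \<epsilon> b"
    by (simp add: sw2_multR)
  also have "sw2 (D a) (\<lambda>u v. \<epsilon> u * \<epsilon> v) = \<epsilon> a"
    by (rule counitLV) (rule eps_lin)
  finally show ?thesis .
qed

lemma D_desc: "teq2 sc (D (dd a b)) (tmul dd (D a) (D b))"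
  unfolding teq2_def
proof (intro allI impI)
  fix \<beta> :: "'h \<Rightarrow> 'h \<Rightarrow> 'k" assume "bilinear_form sc \<beta>"
  then have b: "bil sc (*) \<beta>" by (simp add: bilinear_form_def bil_def)
  have F1: "\<And>f y. Vector_Spaces.linear sc sc f \<Longrightarrow> Vector_Spaces.linear sc (*) (\<lambda>x. \<beta> (f x) y)"
    by (rule lin_F1[OF b])
  have F2: "\<And>f y. Vector_Spaces.linear sc sc f \<Longrightarrow> Vector_Spaces.linear sc (*) (\<lambda>x. \<beta> y (f x))"
    by (rule lin_F2[OF b])
  have inner: "sw2 (D (S (B2 w))) (\<lambda>r t. \<beta> (P * r) (Q * t)) = sw2 (D w) (\<lambda>r t. \<beta> (P * S (B2 r)) (Q * S (B2 t)))" for P Q w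
  proof -
    have "sw2 (D (S (B2 w))) (\<lambda>r t. \<beta> (P * r) (Q * t)) = sw2 (D (B2 w)) (\<lambda>r t. \<beta> (P * S r) (Q * S t))"
      by (rule DS[OF vsK]) (auto intro!: linI F1 F2)
    also have "\<dots> = sw2 (D w) (\<lambda>r t. \<beta> (P * S (B2 r)) (Q * S (B2 t)))"
      by (rule DhomV[OF B2_hom vsK]) (auto intro!: linI F1 F2)
    finally show ?thesis .
  qed
  have mid: "sw2 (D (B1 x1 * b * S (B2 x2))) \<beta> = sw2 (D x1) (\<lambda>p q. sw2 (D b) (\<lambda>c d. sw2 (D x2) (\<lambda>r t. \<beta> (B1 p * c * S (B2 r)) (B1 q * d * S (B2 t)))))" for x1 x2
  proof -
    have "sw2 (D (B1 x1 * b * S (B2 x2))) \<beta> = sw2 (D (B1 x1 * b)) (\<lambda>P Q. sw2 (D (S (B2 x2))) (\<lambda>r t. \<beta> (P * r) (Q * t)))"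
      by (rule DmultV[OF vsK b])
    also have "\<dots> = sw2 (D (B1 x1)) (\<lambda>p q. sw2 (D b) (\<lambda>c d. sw2 (D (S (B2 x2))) (\<lambda>r t. \<beta> (p * c * r) (q * d * t))))"
      by (rule DmultV[OF vsK]) (auto intro!: linI F1 F2)
    also have "\<dots> = sw2 (D x1) (\<lambda>p q. sw2 (D b) (\<lambda>c d. sw2 (D (S (B2 x2))) (\<lambda>r t. \<beta> (B1 p * c * r) (B1 q * d * t))))"
      by (rule DhomV[OF B1_hom vsK]) (auto intro!: linI F1 F2)
    finally show ?thesis by (simp add: inner)
  qed
  let ?\<Psi> = "\<lambda>c d p q r t. \<beta> (B1 p * c * S (B2 r)) (B1 q * d * S (B2 t))"
  have "sw2 (D (dd a b)) \<beta> = sw2 (D a) (\<lambda>x1 x2. sw2 (D (B1 x1 * b * S (B2 x2))) \<beta>)"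
    unfolding desc_def by (rule lin_sw2[OF D_lin[OF vsK b]])
  also have "\<dots> = sw2 (D a) (\<lambda>x1 x2. sw2 (D b) (\<lambda>c d. sw2 (D x1) (\<lambda>p q. sw2 (D x2) (\<lambda>r t. ?\<Psi> c d p q r t))))"
    by (simp add: mid, rule sw2_cong_fun, rule sw2_swap)
  also have "\<dots> = sw2 (D b) (\<lambda>c d. sw2 (D a) (\<lambda>x1 x2. sw2 (D x1) (\<lambda>p q. sw2 (D x2) (\<lambda>r t. ?\<Psi> c d p q r t))))"
    by (rule sw2_swap)
  also have "\<dots> = sw2 (D b) (\<lambda>c d. sw2 (D a) (\<lambda>x1 x2. sw2 (D x1) (\<lambda>p r. sw2 (D x2) (\<lambda>q t. ?\<Psi> c d p q r t))))"
    by (rule sw2_cong_fun, rule swap4[OF vsK, where \<Psi> = "?\<Psi> c d" for c d])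
      (rule F1 F2, (rule lin_multR lin_multL lin_S lin_B1 lin_B2 lin_idH)+)+
  also have "\<dots> = sw2 (D a) (\<lambda>x1 x2. sw2 (D b) (\<lambda>c d. sw2 (D x1) (\<lambda>p r. sw2 (D x2) (\<lambda>q t. ?\<Psi> c d p q r t))))"
    by (rule sw2_swap)
  also have "\<dots> = sw2 (tmul dd (D a) (D b)) \<beta>"
  proof -
    have "\<beta> (dd x1 c) (dd x2 d) = sw2 (D x1) (\<lambda>p r. sw2 (D x2) (\<lambda>q t. ?\<Psi> c d p q r t))" for x1 x2 c d
    proof -
      have "\<beta> (dd x1 c) (dd x2 d) = sw2 (D x1) (\<lambda>p r. \<beta> (B1 p * c * S (B2 r)) (dd x2 d))"
        unfolding desc_def[of D S B1 B2 x1] by (rule lin_sw2[OF F1[OF lin_idH]])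
      also have "\<dots> = sw2 (D x1) (\<lambda>p r. sw2 (D x2) (\<lambda>q t. ?\<Psi> c d p q r t))"
        unfolding desc_def[of D S B1 B2 x2] by (simp only: lin_sw2[OF F2[OF lin_idH]])
      finally show ?thesis .
    qed
    then show ?thesis by (simp add: sw2_tmul)
  qed
  finally show "sw2 (D (dd a b)) \<beta> = sw2 (tmul dd (D a) (D b)) \<beta>" .
qed

lemma D_descH: "bil sc sc G \<Longrightarrow> sw2 (D (dd a b)) G = sw2 (D a) (\<lambda>u v. sw2 (D b) (\<lambda>u' v'. G (dd u u') (dd v v')))"
  using sep2[OF vs D_desc] by (simp add: sw2_tmul)

lemma d_assoc: "dd (dd a b) c = dd a (dd b c)"
proof -
  have "dd (dd a b) c = sw2 (D a) (\<lambda>u v. sw2 (D b) (\<lambda>u' v'. B1 (dd u u') * c * S (B2 (dd v v'))))"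
    unfolding desc_def[of D S B1 B2 "dd a b"] by (rule D_descH) (auto intro!: linI)
  also have "\<dots> = sw2 (D a) (\<lambda>u v. sw2 (D b) (\<lambda>u' v'. B1 u * B1 u' * c * (S (B2 v') * S (B2 v))))"
    by (simp add: RB1[symmetric] RB2[symmetric] S_anti)
  also have "\<dots> = dd a (dd b c)"
    unfolding desc_def by (simp add: sw2_multL sw2_multR mult.assoc)
  finally show ?thesis .
qed

lemma cocyc_eq: "cocyc D S B1 B2 a = dd a 1"
  by (simp add: cocyc_def desc_def)

lemma sigma_hom: "coalg_hom sc D \<epsilon> (cocyc D S B1 B2)"
  unfolding coalg_hom_def
proof (intro conjI allI)
  show "Vector_Spaces.linear sc sc (cocyc D S B1 B2)"
    using lin_d1[of 1] by (simp add: cocyc_eq[abs_def])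
next
  fix x show "\<epsilon> (cocyc D S B1 B2 x) = \<epsilon> x" by (simp add: cocyc_eq eps_d eps_one)
next
  fix x show "teq2 sc (D (cocyc D S B1 B2 x)) (map (\<lambda>(u, v). (cocyc D S B1 B2 u, cocyc D S B1 B2 v)) (D x))"
    unfolding teq2_def
  proof (intro allI impI)
    fix \<beta> :: "'h \<Rightarrow> 'h \<Rightarrow> 'k" assume "bilinear_form sc \<beta>"
    then have b: "bil sc (*) \<beta>" by (simp add: bilinear_form_def bil_def)
    have "sw2 (D (dd x 1)) \<beta> = sw2 (tmul dd (D x) (D 1)) \<beta>"
      using D_desc \<open>bilinear_form sc \<beta>\<close> by (simp add: teq2_def)
    also have "\<dots> = sw2 (D x) (\<lambda>u v. sw2 (D 1) (\<lambda>u' v'. \<beta> (dd u u') (dd v v')))"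
      by (simp add: sw2_tmul)
    also have "\<dots> = sw2 (D x) (\<lambda>u v. \<beta> (dd u 1) (dd v 1))"
    proof -
      have "sw2 (D 1) (\<lambda>u' v'. \<beta> (dd u u') (dd v v')) = \<beta> (dd u 1) (dd v 1)" for u v
        by (rule DoneV[OF vsK]) (auto intro!: linI lin_F1[OF b] lin_F2[OF b] lin_d2)
      then show ?thesis by simp
    qed
    finally show "sw2 (D (cocyc D S B1 B2 x)) \<beta> = sw2 (map (\<lambda>(u, v). (cocyc D S B1 B2 u, cocyc D S B1 B2 v)) (D x)) \<beta>"
      by (simp add: cocyc_eq sw2_map_pair)
  qed
qed


lemma truss:
  "dd a (b * c) = sw3 (comul2_left D a) (\<lambda>x y z. dd x b * S (cocyc D S B1 B2 y) * dd z c)"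
proof -
  let ?\<sigma> = "cocyc D S B1 B2"
  let ?s\<sigma> = "\<lambda>y. S (?\<sigma> y)"
  let ?sb1 = "\<lambda>x. S (B1 x)"
  let ?sb2 = "\<lambda>x. S (B2 x)"
  have l\<sigma>: "Vector_Spaces.linear sc sc ?\<sigma>" using sigma_hom by (simp add: coalg_hom_def)
  have ls\<sigma>: "Vector_Spaces.linear sc sc ?s\<sigma>" by (rule lin_S[OF l\<sigma>])
  have lsb1: "Vector_Spaces.linear sc sc ?sb1" by (auto intro!: linI)
  have lsb2: "Vector_Spaces.linear sc sc ?sb2" by (auto intro!: linI)
  have lB1: "Vector_Spaces.linear sc sc B1" by (rule B1_lin)
  have lB2: "Vector_Spaces.linear sc sc B2" by (rule B2_lin)
  have lb1: "Vector_Spaces.linear sc sc (\<lambda>x. B1 x * b)" by (auto intro!: linI)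
  have lc1: "Vector_Spaces.linear sc sc (\<lambda>x. B1 x * c)" by (auto intro!: linI)
  have lB2c: "Vector_Spaces.linear sc sc (\<lambda>x. B2 x * c)" by (auto intro!: linI)
  have lunitc: "Vector_Spaces.linear sc sc (\<lambda>x. unit x * c)" by (rule lin_multR[OF lin_unit])
  have fb: "(\<lambda>x. dd x b) = conv (\<lambda>x. B1 x * b) ?sb2" by (auto simp: desc_def conv_def)
  have fc: "(\<lambda>x. dd x c) = conv (\<lambda>x. B1 x * c) ?sb2" by (auto simp: desc_def conv_def)
  have \<sigma>_eq: "?\<sigma> = conv B1 ?sb2" by (auto simp: cocyc_def conv_def)
  have s\<sigma>_eq: "?s\<sigma> = conv B2 ?sb1"
  proof -
    have "conv ?\<sigma> (conv B2 ?sb1) = unit"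
      unfolding \<sigma>_eq
      by (simp add: conv_assoc lB1 lB2 lsb1 lsb2 lin_conv conv_assoc[symmetric] conv_hom_antiL[OF B2_hom]
            conv_unitL conv_unitR conv_hom_antiR[OF B1_hom])
    have "?s\<sigma> = conv ?s\<sigma> unit" by (simp add: conv_unitR ls\<sigma>)
    also have "\<dots> = conv ?s\<sigma> (conv ?\<sigma> (conv B2 ?sb1))" by (simp add: \<open>conv ?\<sigma> (conv B2 ?sb1) = unit\<close>)
    also have "\<dots> = conv (conv ?s\<sigma> ?\<sigma>) (conv B2 ?sb1)"
      by (simp add: conv_assoc ls\<sigma> l\<sigma> lin_conv lB2 lsb1)
    also have "\<dots> = conv B2 ?sb1"
      by (simp add: conv_hom_antiL[OF sigma_hom] conv_unitL lin_conv lB2 lsb1)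
    finally show ?thesis .
  qed
  have A: "conv ?s\<sigma> (\<lambda>x. B1 x * c) = (\<lambda>x. B2 x * c)"
  proof -
    have "conv ?s\<sigma> B1 = B2"
      unfolding s\<sigma>_eq by (simp add: conv_assoc lB1 lB2 lsb1 conv_hom_antiL[OF B1_hom] conv_unitR)
    then show ?thesis by (simp add: conv_multR)
  qed
  have B: "conv ?sb2 (\<lambda>x. B2 x * c) = (\<lambda>x. unit x * c)"
    by (simp add: conv_multR conv_hom_antiL[OF B2_hom])
  have C: "conv (\<lambda>x. unit x * c) ?sb2 = (\<lambda>x. c * S (B2 x))"
  proof
    fix y
    have "conv (\<lambda>x. unit x * c) ?sb2 y = sw2 (D y) (\<lambda>u v. sc (\<epsilon> u) (c * S (B2 v)))"
      by (simp add: conv_def unit_def sc_one_mult sc_multL mult.assoc)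
    also have "\<dots> = c * S (B2 y)" by (rule counitLV) (auto intro!: linI)
    finally show "conv (\<lambda>x. unit x * c) ?sb2 y = c * S (B2 y)" .
  qed
  have "sw3 (comul2_left D a) (\<lambda>x y z. dd x b * S (?\<sigma> y) * dd z c) = conv (conv (\<lambda>x. dd x b) ?s\<sigma>) (\<lambda>x. dd x c) a"
    by (simp add: sw3_left conv_def sw2_multR)
  also have "\<dots> = conv (conv (\<lambda>x. B1 x * b) ?sb2) (conv (conv ?s\<sigma> (\<lambda>x. B1 x * c)) ?sb2) a"
    unfolding fb fc
    by (simp add: conv_assoc lin_conv lb1 lsb2 ls\<sigma> lc1)
  also have "\<dots> = conv (\<lambda>x. B1 x * b) (conv (conv ?sb2 (\<lambda>x. B2 x * c)) ?sb2) a"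
    unfolding A by (simp add: conv_assoc lin_conv lb1 lsb2 lB2c)
  also have "\<dots> = conv (\<lambda>x. B1 x * b) (\<lambda>x. c * S (B2 x)) a"
    unfolding B C ..
  also have "\<dots> = dd a (b * c)"
    by (simp add: conv_def desc_def mult.assoc)
  finally show ?thesis by simp
qed

end

theorem mainTheorem7:
  fixes sc :: "'k::field_char_0 \<Rightarrow> 'h::ring_1 \<Rightarrow> 'h"
    and D :: "'h \<Rightarrow> ('h \<times> 'h) list" and \<epsilon> :: "'h \<Rightarrow> 'k" and S B1 B2 :: "'h \<Rightarrow> 'h"
  assumes "rota_baxter_system sc D \<epsilon> S B1 B2"
  shows "hopf_truss sc D \<epsilon> S (desc D S B1 B2) (cocyc D S B1 B2)"
proof -
  interpret RB sc D \<epsilon> S B1 B2 by unfold_locales (rule assms)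
  show ?thesis
    unfolding hopf_truss_def nonunital_bialgebra_def
    using hopf lin_d1 lin_d2 d_assoc D_desc eps_d sigma_hom truss by blast
qed

end
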